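(* For every $r>0$, every $\theta,\varphi\in[0,2\pi]$ and every positive integer $L$, $$\frac{12}{L}\sum_{j=0}^{L-1}\big|1-re^{i(j\theta+\varphi)}\big|^2\ \ge\ \big|1-re^{i\varphi}\big|^2.$$ *)

theory Defs
  imports Complex_Main
begin

end

theory Submission
  imports Defs
begin

definition gg :: "real \<Rightarrow> real" where
  "gg x = cmod (1 - exp (\<i> * complex_of_real x))"

lemma cmod_formula:
  "(cmod (1 - complex_of_real r * exp (\<i> * complex_of_real x)))\<^sup>2 = 1 - 2*r*cos x + r\<^sup>2"
proof -
  have e: "exp (\<i> * complex_of_real x) = Complex (cos x) (sin x)"
    by (simp add: cis_conv_exp[symmetric] complex_eq_iff)
  have "(cmod (1 - complex_of_real r * exp (\<i> * complex_of_real x)))\<^sup>2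
        = (1 - r * cos x)\<^sup>2 + (r * sin x)\<^sup>2"
    unfolding e cmod_power2 by simp
  also have "\<dots> = 1 - 2*r*cos x + r\<^sup>2 * ((sin x)\<^sup>2 + (cos x)\<^sup>2)"
    using sin_cos_squared_add[of x] by algebra
  finally show ?thesis by (simp only: sin_cos_squared_add mult_1_right)
qed

lemma gg_sq: "(gg x)\<^sup>2 = 2 - 2 * cos x"
  using cmod_formula[of 1 x] unfolding gg_def by simp

lemma gg_tri: "gg (a + b - c) \<le> gg a + gg b + gg c"
proof -
  define A where "A = exp (\<i> * complex_of_real a)"
  define B where "B = exp (\<i> * complex_of_real b)"
  define C where "C = exp (- (\<i> * complex_of_real c))"
  have nA: "cmod A = 1" unfolding A_def by (simp add: norm_exp_eq_Re)
  have nB: "cmod B = 1" unfolding B_def by (simp add: norm_exp_eq_Re)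
  have cC: "cmod (1 - C) = gg c"
  proof -
    have "(cmod (1 - C))\<^sup>2 = (gg c)\<^sup>2"
      using cmod_formula[of 1 "-c"] gg_sq[of c] unfolding C_def by simp
    moreover have "0 \<le> gg c" unfolding gg_def by simp
    ultimately show ?thesis by (simp add: power2_eq_iff_nonneg)
  qed
  have E: "exp (\<i> * complex_of_real (a + b - c)) = A * B * C"
    unfolding A_def B_def C_def by (simp add: exp_add[symmetric] algebra_simps)
  have eq: "1 - A * B * C = (1 - A) + A * (1 - B) + (A * B) * (1 - C)"
    by (simp add: algebra_simps)
  have "gg (a + b - c) = cmod ((1 - A) + A * (1 - B) + (A * B) * (1 - C))"
    unfolding gg_def E eq by (rule refl)
  also have "\<dots> \<le> cmod (1 - A) + cmod (A * (1 - B)) + cmod ((A * B) * (1 - C))"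
    by (meson norm_triangle_le order_trans add_mono order_refl norm_triangle_ineq)
  also have "\<dots> = gg a + gg b + gg c"
    using nA nB cC unfolding gg_def A_def B_def by (simp add: norm_mult)
  finally show ?thesis .
qed

lemma sq3: "((x::real) + y + z)\<^sup>2 \<le> 3 * (x\<^sup>2 + y\<^sup>2 + z\<^sup>2)"
proof -
  have "0 \<le> (x - y)\<^sup>2 + (y - z)\<^sup>2 + (x - z)\<^sup>2" by simp
  thus ?thesis by (simp add: power2_eq_square algebra_simps)
qed

lemma double_sum:
  fixes F :: "nat \<Rightarrow> real"
  shows "(\<Sum>i<L. \<Sum>j\<in>{0..i}. F j) = (\<Sum>j<L. real (L - j) * F j)"
proof (induction L)
  case 0 then show ?case by simp
next
  case (Suc L)
  have "(\<Sum>j<Suc L. real (Suc L - j) * F j) = (\<Sum>j<Suc L. real (L - j) * F j + F j)"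
    by (rule sum.cong) (auto simp: Suc_diff_le algebra_simps)
  also have "\<dots> = (\<Sum>j<L. real (L - j) * F j) + (\<Sum>j<Suc L. F j)"
    by (simp add: sum.distrib)
  finally have X: "(\<Sum>j<Suc L. real (Suc L - j) * F j) = (\<Sum>j<L. real (L - j) * F j) + (\<Sum>j<Suc L. F j)" .
  have "{0..L} = {..<Suc L}" by auto
  then show ?case using Suc X by (simp add: sum.lessThan_Suc)
qed

lemma main_bound:
  fixes \<theta> \<phi> :: real and L :: nat
  assumes "L > 0"
  defines "F \<equiv> (\<lambda>j. (gg (real j * \<theta> + \<phi>))\<^sup>2)"
  shows "real L * (gg \<phi>)\<^sup>2 \<le> 12 * (\<Sum>j<L. F j)"
proof -
  have pt: "(gg \<phi>)\<^sup>2 \<le> 3 * (F j + F (i - j) + F i)" if "j \<le> i" for i j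
  proof -
    have "\<phi> = (real j * \<theta> + \<phi>) + (real (i - j) * \<theta> + \<phi>) - (real i * \<theta> + \<phi>)"
      using that by (simp add: of_nat_diff algebra_simps)
    hence "gg \<phi> \<le> gg (real j * \<theta> + \<phi>) + gg (real (i - j) * \<theta> + \<phi>) + gg (real i * \<theta> + \<phi>)"
      by (metis gg_tri)
    moreover have "0 \<le> gg \<phi>" unfolding gg_def by simp
    ultimately have "(gg \<phi>)\<^sup>2 \<le> (gg (real j * \<theta> + \<phi>) + gg (real (i - j) * \<theta> + \<phi>) + gg (real i * \<theta> + \<phi>))\<^sup>2"
      by (simp add: power_mono)
    with sq3 show ?thesis unfolding F_def by (meson order_trans)
  qed
  have Fnn: "0 \<le> F j" for j unfolding F_def by simp
  have "(\<Sum>i<L. \<Sum>j\<in>{0..i}. (gg \<phi>)\<^sup>2) \<le> (\<Sum>i<L. \<Sum>j\<in>{0..i}. 3 * (F j + F (i - j) + F i))"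
    by (intro sum_mono pt) auto
  also have "\<dots> = 3 * (\<Sum>i<L. (\<Sum>j\<in>{0..i}. F j) + (\<Sum>j\<in>{0..i}. F (i - j)) + real (Suc i) * F i)"
    by (simp add: sum_distrib_left sum.distrib mult.left_commute)
  also have "\<dots> = 3 * (\<Sum>i<L. 2 * (\<Sum>j\<in>{0..i}. F j) + real (Suc i) * F i)"
  proof -
    have "(\<Sum>j\<in>{0..i}. F (i - j)) = (\<Sum>j\<in>{0..i}. F j)" for i
      using sum.atLeastAtMost_rev[of "\<lambda>j. F (i - j)" 0 i] by simp
    thus ?thesis by simp
  qed
  also have "\<dots> = 3 * (\<Sum>j<L. (2 * real (L - j) + real (Suc j)) * F j)"
  proof -
    have "(\<Sum>i<L. 2 * (\<Sum>j\<in>{0..i}. F j) + real (Suc i) * F i)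
        = (\<Sum>j<L. (2 * real (L - j) + real (Suc j)) * F j)"
      by (simp only: sum.distrib double_sum sum_distrib_left[symmetric] distrib_right mult.assoc)
    thus ?thesis by simp
  qed
  also have "\<dots> \<le> 3 * (\<Sum>j<L. (2 * real L + 1) * F j)"
    by (intro mult_left_mono sum_mono mult_right_mono Fnn) (auto simp: of_nat_diff)
  also have "\<dots> = 3 * (2 * real L + 1) * (\<Sum>j<L. F j)"
    by (simp only: sum_distrib_left mult.assoc)
  finally have A: "(\<Sum>i<L. real (Suc i)) * (gg \<phi>)\<^sup>2 \<le> 3 * (2 * real L + 1) * (\<Sum>j<L. F j)"
    by (simp add: sum_distrib_right)
  have S2: "2 * (\<Sum>i<L. real (Suc i)) = real L * (real L + 1)"
    by (induction L) (auto simp: algebra_simps)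
  have A2: "2 * ((\<Sum>i<L. real (Suc i)) * (gg \<phi>)\<^sup>2) \<le> 2 * (3 * (2 * real L + 1) * (\<Sum>j<L. F j))"
    using A by linarith
  have e1: "2 * ((\<Sum>i<L. real (Suc i)) * (gg \<phi>)\<^sup>2) = real L * (real L + 1) * (gg \<phi>)\<^sup>2"
    using S2 by (metis mult.assoc)
  have e2: "2 * (3 * (2 * real L + 1) * (\<Sum>j<L. F j)) = 6 * (2 * real L + 1) * (\<Sum>j<L. F j)"
    by simp
  have B: "real L * (real L + 1) * (gg \<phi>)\<^sup>2 \<le> 6 * (2 * real L + 1) * (\<Sum>j<L. F j)"
    using A2 by (simp only: e1 e2)
  have T: "0 \<le> (\<Sum>j<L. F j)" by (simp add: sum_nonneg Fnn)
  have "6 * (2 * real L + 1) * (\<Sum>j<L. F j) \<le> (real L + 1) * (12 * (\<Sum>j<L. F j))"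
  proof -
    have "6 * (2 * real L + 1) \<le> (real L + 1) * 12" by simp
    from mult_right_mono[OF this T] show ?thesis by (simp only: mult.assoc mult.commute mult.left_commute)
  qed
  moreover have "real L * (real L + 1) * (gg \<phi>)\<^sup>2 = (real L + 1) * (real L * (gg \<phi>)\<^sup>2)"
    by (simp only: mult.assoc mult.commute mult.left_commute)
  ultimately have "(real L + 1) * (real L * (gg \<phi>)\<^sup>2) \<le> (real L + 1) * (12 * (\<Sum>j<L. F j))"
    using B by linarith
  thus ?thesis by (simp add: mult_le_cancel_left_pos)
qed

theorem proposition6p1:
  fixes r \<theta> \<phi> :: real and L :: nat
  assumes "r > 0"
    and "0 \<le> \<theta>" and "\<theta> \<le> 2 * pi"
    and "0 \<le> \<phi>" and "\<phi> \<le> 2 * pi"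
    and "L > 0"
  shows "12 / real L * (\<Sum>j<L. (cmod (1 - complex_of_real r * exp (\<i> * complex_of_real (real j * \<theta> + \<phi>))))\<^sup>2)
           \<ge> (cmod (1 - complex_of_real r * exp (\<i> * complex_of_real \<phi>)))\<^sup>2"
proof -
  have h: "(cmod (1 - complex_of_real r * exp (\<i> * complex_of_real x)))\<^sup>2 = (1 - r)\<^sup>2 + r * (gg x)\<^sup>2" for x
    unfolding cmod_formula gg_sq by (simp add: power2_eq_square algebra_simps)
  define T where "T = (\<Sum>j<L. (gg (real j * \<theta> + \<phi>))\<^sup>2)"
  have MB: "real L * (gg \<phi>)\<^sup>2 \<le> 12 * T"
    unfolding T_def using main_bound[OF assms(6)] by simp
  have Lp: "real L > 0" using assms(6) by simp
  have S: "(\<Sum>j<L. (1 - r)\<^sup>2 + r * (gg (real j * \<theta> + \<phi>))\<^sup>2)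
     = real L * (1 - r)\<^sup>2 + r * T"
    unfolding T_def by (simp add: sum.distrib sum_distrib_left)
  have g: "(gg \<phi>)\<^sup>2 \<le> 12 * T / real L"
    using MB Lp by (simp add: field_simps)
  have "12 / real L * (real L * (1 - r)\<^sup>2 + r * T) = 12 * (1 - r)\<^sup>2 + r * (12 * T / real L)"
    using Lp by (simp add: field_simps)
  also have "\<dots> \<ge> (1 - r)\<^sup>2 + r * (gg \<phi>)\<^sup>2"
    using g assms(1) by (smt (verit) mult_left_mono zero_le_power2)
  finally have X: "(1 - r)\<^sup>2 + r * (gg \<phi>)\<^sup>2 \<le> 12 / real L * (real L * (1 - r)\<^sup>2 + r * T)" .
  show ?thesis using X by (simp only: h S)
qed

end
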